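(* For every prime $p>2$ and every integer $a$ with $|a|\le 2\sqrt p$, there is a prime $\ell\neq p$ dividing $(p+1+a)(p+1-a)$. Moreover this fails for $p=2$: there is an integer $a$ with $|a|\le 2\sqrt 2$ such that $(3+a)(3-a)$ is a power of $2$.
   Context: This is the case $n=1$ (rational $p$-th Fourier coefficients) of the statement: there is $C_1$ such that for every prime $p>C_1$ and every $p$-th Fourier coefficient of degree $1$ there is a prime not over $p$ dividing $(a_p+p+1)(a_p-p-1)$; the paper states that the best such bound is $C_1=2$. *)

theory Defs
  imports Complex_Main "HOL-Computational_Algebra.Primes"
begin

end

theory Submission
  imports Defs
begin

lemma aux_factor:
  fixes X :: int and p :: nat
  assumes "X > 1" "\<not> int p dvd X"
  shows "\<exists>l::nat. prime l \<and> l \<noteq> p \<and> int l dvd X"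
proof -
  have "nat X \<noteq> 1" using assms by simp
  then obtain l where l: "prime l" "l dvd nat X" using prime_factor_nat by blast
  have "int l dvd X" using l(2) assms(1)
    by (metis int_dvd_int_iff int_nat_eq less_trans zero_less_one order.strict_implies_order)
  moreover have "l \<noteq> p" using \<open>int l dvd X\<close> assms(2) by auto
  ultimately show ?thesis using l(1) by blast
qed

lemma part1:
  fixes p :: nat and a :: int
  assumes pp: "prime p" and p2: "p > 2" and ab: "\<bar>real_of_int a\<bar> \<le> 2 * sqrt (real p)"
  shows "\<exists>l::nat. prime l \<and> l \<noteq> p \<and> int l dvd (int p + 1 + a) * (int p + 1 - a)"
proof -
  have "(real_of_int a)^2 = \<bar>real_of_int a\<bar>^2" by simp
  also have "\<dots> \<le> (2 * sqrt (real p))^2"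
    using ab by (intro power_mono) auto
  also have "\<dots> = 4 * real p" by (simp add: power_mult_distrib)
  finally have "real_of_int (a^2) \<le> real_of_int (4 * int p)" by simp
  hence a2: "a^2 \<le> 4 * int p" by linarith
  have "a^2 < (int p + 1)^2"
  proof -
    have e: "(int p + 1)^2 - 4 * int p = (int p - 1)^2" by (simp add: power2_eq_square algebra_simps)
    have "(int p - 1)^2 > 0" using p2 by simp
    hence "4 * int p < (int p + 1)^2" using e by linarith
    thus ?thesis using a2 by linarith
  qed
  hence "\<bar>a\<bar> < int p + 1"
    by (metis abs_of_nonneg of_nat_0_le_iff add_nonneg_nonneg zero_le_one power2_abs power_less_imp_less_base)
  hence ap: "\<bar>a\<bar> \<le> int p" by linarith
  define A where "A = int p + 1 + a"
  define B where "B = int p + 1 - a"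
  have Apos: "A \<ge> 1" "B \<ge> 1" using ap unfolding A_def B_def by auto
  have podd: "odd p" using pp p2 by (metis prime_odd_nat order_less_imp_le numeral_le_iff le_numeral_extra(4) less_le)
  have notboth: "\<not> (int p dvd A \<and> int p dvd B)"
  proof
    assume "int p dvd A \<and> int p dvd B"
    hence "int p dvd A + B" by auto
    moreover have "A + B = int p * 2 + 2" unfolding A_def B_def by simp
    ultimately have "int p dvd 2" by (metis dvd_add_right_iff dvd_triv_left)
    hence "p dvd 2" by (metis int_dvd_int_iff of_nat_numeral)
    thus False using p2 by (simp add: dvd_imp_le leD)
  qed
  have key: "\<exists>l::nat. prime l \<and> l \<noteq> p \<and> (int l dvd A \<or> int l dvd B)"
    if "X = A \<or> X = B" "\<not> int p dvd X" for X
  proof (cases "X > 1")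
    case True thus ?thesis using aux_factor[of X p] that by blast
  next
    case False
    hence X1: "X = 1" using that(1) Apos by auto
    define Y where "Y = 2 * int p + 1"
    have "Y = A \<or> Y = B" using that(1) X1 unfolding Y_def A_def B_def by auto
    have "\<not> int p dvd Y"
    proof
      assume "int p dvd Y"
      hence "int p dvd 1" unfolding Y_def by (simp add: dvd_add_right_iff)
      thus False using p2 by simp
    qed
    moreover have "Y > 1" unfolding Y_def using p2 by simp
    ultimately obtain l where "prime l" "l \<noteq> p" "int l dvd Y" using aux_factor by blast
    thus ?thesis using \<open>Y = A \<or> Y = B\<close> by blast
  qed
  have "\<exists>l::nat. prime l \<and> l \<noteq> p \<and> (int l dvd A \<or> int l dvd B)"
    using notboth key by blast
  thus ?thesis unfolding A_def[symmetric] B_def[symmetric] by (auto simp: A_def B_def)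
qed

theorem lemma2p5:
  shows "(\<forall>(p::nat) (a::int). prime p \<and> p > 2 \<and> \<bar>real_of_int a\<bar> \<le> 2 * sqrt (real p) \<longrightarrow>
            (\<exists>l::nat. prime l \<and> l \<noteq> p \<and>
               int l dvd (int p + 1 + a) * (int p + 1 - a)))
       \<and> (\<exists>(a::int) (k::nat). \<bar>real_of_int a\<bar> \<le> 2 * sqrt 2 \<and> (3 + a) * (3 - a) = 2 ^ k)"
proof
  show "\<forall>(p::nat) (a::int). prime p \<and> p > 2 \<and> \<bar>real_of_int a\<bar> \<le> 2 * sqrt (real p) \<longrightarrow>
            (\<exists>l::nat. prime l \<and> l \<noteq> p \<and>
               int l dvd (int p + 1 + a) * (int p + 1 - a))" using part1 by blast
  have "(1::real) \<le> sqrt 2" by simp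
  hence "\<bar>real_of_int 1\<bar> \<le> 2 * sqrt 2" by (simp only: of_int_1 abs_one)
  moreover have "(3 + (1::int)) * (3 - 1) = 2 ^ 3" by simp
  ultimately have "\<bar>real_of_int 1\<bar> \<le> 2 * sqrt 2 \<and> (3 + (1::int)) * (3 - 1) = 2 ^ 3" by blast
  thus "\<exists>(a::int) (k::nat). \<bar>real_of_int a\<bar> \<le> 2 * sqrt 2 \<and> (3 + a) * (3 - a) = 2 ^ k" by blast
qed

end
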